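(* Let $N\cong\mathbb{Z}^3$ and let $P$ be a minimal Fano polytope in $N_\mathbb{R}$ which contains two triangles $T_1,T_2$, whose vertices are vertices of $P$, lying in distinct two-dimensional linear subspaces $L_1\ne L_2$, such that each $T_j$ is equivalent (under an isomorphism of lattices $\mathbb{Z}^2\to N\cap L_j$) to $\mathrm{conv}\{(1,0),(0,1),(-2,-1)\}$ (the Fano triangle of $\mathbb{P}(1,1,2)$). Then, up to the action of $GL(3,\mathbb{Z})$, $P$ is the convex hull of the columns of one of $$\begin{pmatrix}1&0&0&-2&-2\\0&1&0&-1&0\\0&0&1&0&-1\end{pmatrix}\quad\text{or}\quad\begin{pmatrix}1&0&-2&1&-3\\0&1&-1&1&-1\\0&0&0&2&-2\end{pmatrix}.$$
   Context: A Fano polytope is a three-dimensional convex polytope $P\subset N_\mathbb{R}$ with vertices in $N$ such that the origin is the only lattice point in the interior of $P$. It is minimal if, for every vertex $\rho$ of $P$, the polytope $\mathrm{conv}((P\cap N)\setminus\{\rho\})$ is not a Fano polytope. Polytopes are identified up to $GL(3,\mathbb{Z})$ (after choosing a basis of $N$). *)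

theory Defs
  imports "HOL-Analysis.Analysis"
begin

definition lattice3 :: "(real^3) set" where
  "lattice3 = {x. \<forall>i. x $ i \<in> \<int>}"

definition lattice2 :: "(real^2) set" where
  "lattice2 = {x. \<forall>i. x $ i \<in> \<int>}"

definition fano_polytope :: "(real^3) set \<Rightarrow> bool" where
  "fano_polytope P \<longleftrightarrow>
     (\<exists>V. finite V \<and> V \<subseteq> lattice3 \<and> P = convex hull V) \<and>
     aff_dim P = 3 \<and>
     interior P \<inter> lattice3 = {0}"

definition minimal_fano_polytope :: "(real^3) set \<Rightarrow> bool" where
  "minimal_fano_polytope P \<longleftrightarrow> fano_polytope P \<and>
     (\<forall>\<rho>. \<rho> extreme_point_of P \<longrightarrow>
        \<not> fano_polytope (convex hull ((P \<inter> lattice3) - {\<rho>})))"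

definition triangle_P112 :: "(real^2) set" where
  "triangle_P112 = convex hull {vector [1, 0], vector [0, 1], vector [-2, -1]}"

definition P112_triangle_in :: "(real^3) set \<Rightarrow> (real^3) set \<Rightarrow> bool" where
  "P112_triangle_in L T \<longleftrightarrow> subspace L \<and> dim L = 2 \<and>
     (\<exists>f :: real^2 \<Rightarrow> real^3. linear f \<and> inj f \<and> range f = L \<and>
        f ` lattice2 = lattice3 \<inter> L \<and> f ` triangle_P112 = T)"

definition GL3Z :: "(real^3^3) set" where
  "GL3Z = {M. (\<forall>i j. M $ i $ j \<in> \<int>) \<and> \<bar>det M\<bar> = 1}"

definition GL3Z_equivalent :: "(real^3) set \<Rightarrow> (real^3) set \<Rightarrow> bool" where
  "GL3Z_equivalent P Q \<longleftrightarrow> (\<exists>M\<in>GL3Z. P = (\<lambda>x. M *v x) ` Q)"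

definition polytopeA :: "(real^3) set" where
  "polytopeA = convex hull {vector [1,0,0], vector [0,1,0], vector [0,0,1],
                            vector [-2,-1,0], vector [-2,0,-1]}"

definition polytopeB :: "(real^3) set" where
  "polytopeB = convex hull {vector [1,0,0], vector [0,1,0], vector [-2,-1,0],
                            vector [1,1,2], vector [-3,-1,-2]}"

end

theory Submission
  imports Defs
begin

definition inAi :: "int \<Rightarrow> int \<Rightarrow> int \<Rightarrow> int \<Rightarrow> bool" where
  "inAi n X Y Z \<longleftrightarrow> X - 3*Y + Z \<le> n \<and> X + Y + Z \<le> n \<and> X + Y - 3*Z \<le> n \<and> X - 3*Y - 3*Z \<le> n \<and> - X + Y + Z \<le> n"

definition candY :: "int \<Rightarrow> int \<Rightarrow> int \<Rightarrow> int \<Rightarrow> bool" where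
  "candY n jj m Y = inAi n (jj + n * ((Y + m - n - jj + n - 1) div n)) Y m"

definition check :: "int \<Rightarrow> int \<Rightarrow> int \<Rightarrow> bool" where
  "check n j k = list_ex (\<lambda>m. candY n ((m*j) mod n) m ((m*k) mod n) \<or> candY n ((m*j) mod n) m ((m*k) mod n - n)) [1..n-1]"

lemma check_small: "list_all (\<lambda>n. list_all (\<lambda>j. list_all (\<lambda>k. (n,j,k) = (2,1,1) \<or> check n j k) [0..n-1]) [0..n-1]) [2..11]"
  by code_simp

definition good :: "int \<Rightarrow> int \<Rightarrow> int \<Rightarrow> bool" where
  "good n j k \<longleftrightarrow> (\<exists>m X Y. 1 \<le> m \<and> m < n \<and> n dvd (X - m*j) \<and> n dvd (Y - m*k) \<and> inAi n X Y m)"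

lemma good_intro:
  assumes "1 \<le> m" "m < n" "n dvd (X - m*j)" "n dvd (Y - m*k)" "inAi n X Y m"
  shows "good n j k"
  unfolding good_def using assms by blast

lemma dvd_helper: "n dvd ((a::int) mod n + n * q - a)"
proof -
  have e: "a = n*(a div n) + a mod n" by simp
  have "a mod n + n * q - a = n * (q - a div n)"
    by (subst (2) e) (simp add: algebra_simps)
  then show ?thesis by simp
qed

lemma dvd_helper2: "n dvd ((a::int) mod n - n - a)"
  using dvd_helper[of n a "-1"] by simp

lemma dvd_helper0: "n dvd ((a::int) mod n - a)"
  using dvd_helper[of n a 0] by simp

lemma check_good: assumes "check n j k" shows "good n j k"
proof -
  from assms obtain m where m: "m \<in> set [1..n-1]" and
    c: "candY n ((m*j) mod n) m ((m*k) mod n) \<or> candY n ((m*j) mod n) m ((m*k) mod n - n)"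
    unfolding check_def list_ex_iff by blast
  from m have m1: "1 \<le> m" "m < n" by auto
  show ?thesis
  proof (cases "candY n ((m*j) mod n) m ((m*k) mod n)")
    case True
    define Y where "Y = (m*k) mod n"
    define X where "X = (m*j) mod n + n * ((Y + m - n - (m*j) mod n + n - 1) div n)"
    have "inAi n X Y m" using True unfolding candY_def X_def Y_def .
    moreover have "n dvd (X - m*j)" unfolding X_def by (rule dvd_helper)
    moreover have "n dvd (Y - m*k)" unfolding Y_def by (rule dvd_helper0)
    ultimately show ?thesis using m1 good_intro by blast
  next
    case False
    then have c2: "candY n ((m*j) mod n) m ((m*k) mod n - n)" using c by blast
    define Y where "Y = (m*k) mod n - n"
    define X where "X = (m*j) mod n + n * ((Y + m - n - (m*j) mod n + n - 1) div n)"
    have "inAi n X Y m" using c2 unfolding candY_def X_def Y_def .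
    moreover have "n dvd (X - m*j)" unfolding X_def by (rule dvd_helper)
    moreover have "n dvd (Y - m*k)" unfolding Y_def by (rule dvd_helper2)
    ultimately show ?thesis using m1 good_intro by blast
  qed
qed

lemma good_large:
  assumes "12 \<le> n" "0 \<le> k" "k < n"
  shows "good n j k"
proof -
  have "\<exists>m Y. 1 \<le> m \<and> m \<le> 3 \<and> n dvd (Y - m*k) \<and> 4 * \<bar>Y\<bar> \<le> n"
  proof -
    consider "4*k \<le> n" | "4*k \<ge> 3*n" | "8*k \<ge> 3*n \<and> 8*k \<le> 5*n" | "4*k > n \<and> 8*k < 3*n" | "8*k > 5*n \<and> 4*k < 3*n"
      by linarith
    then show ?thesis
    proof cases
      case 1 then show ?thesis using assms by (rule_tac exI[of _ 1], rule_tac exI[of _ k]) auto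
    next
      case 2 then show ?thesis using assms by (rule_tac exI[of _ 1], rule_tac exI[of _ "k-n"]) auto
    next
      case 3 then show ?thesis using assms by (rule_tac exI[of _ 2], rule_tac exI[of _ "2*k-n"]) (auto simp: abs_if)
    next
      case 4 then show ?thesis using assms by (rule_tac exI[of _ 3], rule_tac exI[of _ "3*k-n"]) (auto simp: abs_if)
    next
      case 5 then show ?thesis using assms
        by (rule_tac exI[of _ 3], rule_tac exI[of _ "3*k-2*n"]) (auto simp: abs_if dvd_def intro: exI[of _ "-2"])
    qed
  qed
  then obtain m Y where mY: "1 \<le> m" "m \<le> 3" "n dvd (Y - m*k)" "4 * \<bar>Y\<bar> \<le> n" by blast
  define X where "X = (m*j) mod n + n * ((Y + m - n - (m*j) mod n + n - 1) div n)"
  have n0: "n > 0" using assms by simp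
  have X1: "Y + m - n \<le> X" "X < Y + m"
  proof -
    define d where "d = Y + m - n - (m*j) mod n"
    have X': "X = (m*j) mod n + n * ((d + n - 1) div n)" unfolding X_def d_def by simp
    have e: "n * ((d + n - 1) div n) + (d + n - 1) mod n = d + n - 1" by (rule mult_div_mod_eq)
    have "0 \<le> (d + n - 1) mod n" "(d + n - 1) mod n < n" using n0 by simp_all
    then have "n * ((d + n - 1) div n) \<le> d + n - 1" "n * ((d + n - 1) div n) > d - 1" using e by linarith+
    then show "Y + m - n \<le> X" "X < Y + m" unfolding X' d_def by linarith+
  qed
  have Yb: "4*Y \<le> n" "-4*Y \<le> n" using mY(4) by linarith+
  have "inAi n X Y m" unfolding inAi_def using X1 mY(1,2) Yb assms(1) by linarith
  moreover have "n dvd (X - m*j)" unfolding X_def by (rule dvd_helper)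
  ultimately show ?thesis using mY assms by (intro good_intro[of m n X j Y k]) auto
qed

lemma good_all:
  assumes "2 \<le> n" "0 \<le> j" "j < n" "0 \<le> k" "k < n" "(n,j,k) \<noteq> (2,1,1)"
  shows "good n j k"
proof (cases "n \<le> 11")
  case True
  have n: "n \<in> set [2..11]" unfolding set_upto using assms True by simp
  have j: "j \<in> set [0..n-1]" and k: "k \<in> set [0..n-1]" unfolding set_upto using assms True by simp_all
  have "(n,j,k) = (2,1,1) \<or> check n j k"
    using check_small n j k unfolding list_all_iff by metis
  then show ?thesis using assms check_good by blast
next
  case False then show ?thesis using good_large assms by auto
qed



lemma vec2_decomp: "(z::real^2) = z$1 *\<^sub>R vector[1,0] + z$2 *\<^sub>R vector[0,1]"
  by (simp add: vec_eq_iff forall_2)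

lemma lattice2_iff: "z \<in> lattice2 \<longleftrightarrow> z$1 \<in> \<int> \<and> z$2 \<in> \<int>"
  by (simp add: lattice2_def forall_2)

lemma lattice3_iff: "x \<in> lattice3 \<longleftrightarrow> x$1 \<in> \<int> \<and> x$2 \<in> \<int> \<and> x$3 \<in> \<int>"
  by (simp add: lattice3_def forall_3)

lemma lattice3_add: "x \<in> lattice3 \<Longrightarrow> y \<in> lattice3 \<Longrightarrow> x + y \<in> lattice3"
  by (simp add: lattice3_iff)
lemma lattice3_diff: "x \<in> lattice3 \<Longrightarrow> y \<in> lattice3 \<Longrightarrow> x - y \<in> lattice3"
  by (simp add: lattice3_iff)
lemma lattice3_uminus: "x \<in> lattice3 \<Longrightarrow> - x \<in> lattice3"
  by (simp add: lattice3_iff)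
lemma lattice3_scale: "u \<in> \<int> \<Longrightarrow> x \<in> lattice3 \<Longrightarrow> u *\<^sub>R x \<in> lattice3"
  by (simp add: lattice3_iff)
lemma lattice3_zero: "0 \<in> lattice3"
  by (simp add: lattice3_iff)

lemma tri_data:
  assumes "P112_triangle_in L T"
  obtains a b where "a \<in> lattice3" "b \<in> lattice3"
    "T = convex hull {a, b, -2 *\<^sub>R a - b}"
    "\<And>u v. u *\<^sub>R a + v *\<^sub>R b = 0 \<Longrightarrow> u = 0 \<and> v = 0"
    "\<And>x. x \<in> L \<longleftrightarrow> (\<exists>u v. x = u *\<^sub>R a + v *\<^sub>R b)"
    "\<And>x. x \<in> lattice3 \<Longrightarrow> x \<in> L \<Longrightarrow> \<exists>u v. u \<in> \<int> \<and> v \<in> \<int> \<and> x = u *\<^sub>R a + v *\<^sub>R b"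
    "a extreme_point_of T" "b extreme_point_of T" "(-2 *\<^sub>R a - b) extreme_point_of T"
    "subspace L" "dim L = 2"
proof -
  from assms obtain f :: "real^2 \<Rightarrow> real^3" where f: "linear f" "inj f" "range f = L"
    "f ` lattice2 = lattice3 \<inter> L" "f ` triangle_P112 = T" and L: "subspace L" "dim L = 2"
    unfolding P112_triangle_in_def by blast
  define a where "a = f (vector[1,0])"
  define b where "b = f (vector[0,1])"
  have fz: "f z = z$1 *\<^sub>R a + z$2 *\<^sub>R b" for z
    by (subst vec2_decomp) (simp add: a_def b_def linear_add[OF f(1)] linear_cmul[OF f(1)])
  have fv: "f (vector[u,v]) = u *\<^sub>R a + v *\<^sub>R b" for u v by (simp add: fz)
  have l10: "vector[1,0] \<in> lattice2" and l01: "vector[0,1] \<in> lattice2"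
    by (simp_all add: lattice2_iff)
  have a: "a \<in> lattice3" using f(4) l10 unfolding a_def by blast
  have b: "b \<in> lattice3" using f(4) l01 unfolding b_def by blast
  have T: "T = convex hull {a, b, -2 *\<^sub>R a - b}"
  proof -
    have "T = convex hull (f ` {vector [1, 0], vector [0, 1], vector [-2, -1]})"
      using f(5) convex_hull_linear_image[OF f(1)] unfolding triangle_P112_def by metis
    also have "f ` {vector [1, 0], vector [0, 1], vector [-2, -1]} = {a, b, -2 *\<^sub>R a - b}"
      using fv[of "-2" "-1"] by (simp add: a_def b_def)
    finally show ?thesis .
  qed
  have ind: "u = 0 \<and> v = 0" if "u *\<^sub>R a + v *\<^sub>R b = 0" for u v
  proof -
    have "f (vector[u,v]) = f 0" using that fv linear_0[OF f(1)] by simp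
    then have "(vector[u,v] :: real^2) = 0" using f(2) by (simp add: inj_def)
    then show ?thesis by (metis vector_2 zero_index)
  qed
  have Lx: "x \<in> L \<longleftrightarrow> (\<exists>u v. x = u *\<^sub>R a + v *\<^sub>R b)" for x
  proof
    assume "x \<in> L" then obtain z where "x = f z" using f(3) by blast
    then show "\<exists>u v. x = u *\<^sub>R a + v *\<^sub>R b" using fz by blast
  next
    assume "\<exists>u v. x = u *\<^sub>R a + v *\<^sub>R b"
    then obtain u v where "x = u *\<^sub>R a + v *\<^sub>R b" by blast
    then have "x = f (vector[u,v])" using fv by simp
    then show "x \<in> L" using f(3) by blast
  qed
  have sat: "\<exists>u v. u \<in> \<int> \<and> v \<in> \<int> \<and> x = u *\<^sub>R a + v *\<^sub>R b" if "x \<in> lattice3" "x \<in> L" for x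
  proof -
    from that f(4) obtain z where "z \<in> lattice2" "x = f z" by (metis IntI imageE)
    then show ?thesis using fz lattice2_iff by blast
  qed
  have ncol: "\<not> collinear {a, b, -2 *\<^sub>R a - b}"
  proof
    assume "collinear {a, b, -2 *\<^sub>R a - b}"
    then have "collinear {0, a - b, (-2 *\<^sub>R a - b) - b}"
      using collinear_3[of a b "-2 *\<^sub>R a - b"] by simp
    then consider "a - b = 0" | "(-2 *\<^sub>R a - b) - b = 0" | c where "(-2 *\<^sub>R a - b) - b = c *\<^sub>R (a - b)"
      unfolding collinear_lemma by blast
    then show False
    proof cases
      case 1 then have "1 *\<^sub>R a + (-1) *\<^sub>R b = 0" by simp
      then show False using ind by fastforce
    next
      case 2 then have "(-2) *\<^sub>R a + (-2) *\<^sub>R b = 0" by (simp add: vec_eq_iff algebra_simps)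
      then show False using ind by fastforce
    next
      case 3 then have "(-2 - c) *\<^sub>R a + (c - 2) *\<^sub>R b = 0" by (simp add: vec_eq_iff algebra_simps)
      then have "-2 - c = 0 \<and> c - 2 = 0" using ind by blast
      then show False by linarith
    qed
  qed
  then have nad: "\<not> affine_dependent {a, b, -2 *\<^sub>R a - b}"
    using affine_dependent_imp_collinear_3 by blast
  have ext: "x extreme_point_of T" if "x \<in> {a, b, -2 *\<^sub>R a - b}" for x
    using extreme_point_of_convex_hull_affine_independent[OF nad] that T by simp
  show ?thesis
    by (rule that[OF a b T ind Lx sat ext ext ext L]) auto
qed

lemma vec3_eq: "(x::real^3) = y \<longleftrightarrow> x$1 = y$1 \<and> x$2 = y$2 \<and> x$3 = y$3"
  by (simp add: vec_eq_iff forall_3)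

lemma bounded_lattice_finite:
  assumes "bounded S" shows "finite (S \<inter> lattice3)"
proof -
  obtain B where B: "\<And>x. x \<in> S \<Longrightarrow> norm x \<le> B" using assms bounded_iff by blast
  define K where "K = \<lceil>B\<rceil>"
  define g where "g = (\<lambda>(i::int,j::int,k::int). vector[real_of_int i, real_of_int j, real_of_int k] :: real^3)"
  have "S \<inter> lattice3 \<subseteq> g ` ({-K..K} \<times> {-K..K} \<times> {-K..K})"
  proof
    fix x assume x: "x \<in> S \<inter> lattice3"
    have bnd: "\<bar>x$i\<bar> \<le> B" for i using B[of x] x component_le_norm_cart[of x i] by auto
    have "x$1 \<in> \<int>" "x$2 \<in> \<int>" "x$3 \<in> \<int>" using x by (auto simp: lattice3_iff)
    then obtain i j k where ijk: "x$1 = of_int i" "x$2 = of_int j" "x$3 = of_int k" by (metis Ints_cases)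
    have "\<bar>real_of_int i\<bar> \<le> B" "\<bar>real_of_int j\<bar> \<le> B" "\<bar>real_of_int k\<bar> \<le> B"
      using bnd[of 1] bnd[of 2] bnd[of 3] ijk by auto
    then have "i \<in> {-K..K}" "j \<in> {-K..K}" "k \<in> {-K..K}" unfolding K_def
      by (auto simp: abs_le_iff) linarith+
    moreover have "x = g (i,j,k)" unfolding g_def using ijk by (simp add: vec3_eq)
    ultimately show "x \<in> g ` ({-K..K} \<times> {-K..K} \<times> {-K..K})" by blast
  qed
  then show ?thesis by (rule finite_subset) simp
qed

lemma sep0:
  fixes K :: "(real^3) set"
  assumes "convex K" "0 \<in> K" "0 \<notin> interior K"
  shows "\<exists>n. n \<noteq> 0 \<and> (\<forall>x\<in>K. 0 \<le> n \<bullet> x)"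
proof (cases "interior K = {}")
  case True
  then obtain a b where ab: "a \<noteq> 0" "K \<subseteq> {x. a \<bullet> x = b}"
    using empty_interior_subset_hyperplane[OF assms(1)] by metis
  then have "b = 0" using assms(2) by auto
  then show ?thesis using ab by (intro exI[of _ a]) auto
next
  case False
  obtain n where n: "n \<noteq> 0" "\<forall>x\<in>interior K. 0 \<le> n \<bullet> x"
    using separating_hyperplane_set_0[OF convex_interior[OF assms(1)] assms(3)] by blast
  have "closure (interior K) \<subseteq> {x. 0 \<le> n \<bullet> x}"
    by (rule closure_minimal) (use n closed_halfspace_ge[of 0 n] in auto)
  then have "closure K \<subseteq> {x. 0 \<le> n \<bullet> x}"
    using convex_closure_interior[OF assms(1) False] by simp
  then show ?thesis using n closure_subset by (intro exI[of _ n]) auto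
qed

lemma min_sep:
  assumes "minimal_fano_polytope P" "\<rho> extreme_point_of P"
  shows "\<exists>n. n \<noteq> 0 \<and> (\<forall>q \<in> P \<inter> lattice3 - {\<rho>}. 0 \<le> n \<bullet> q)"
proof -
  have F: "fano_polytope P" and nF: "\<not> fano_polytope (convex hull ((P \<inter> lattice3) - {\<rho>}))"
    using assms unfolding minimal_fano_polytope_def by auto
  from F obtain V where V: "finite V" "P = convex hull V" and I: "interior P \<inter> lattice3 = {0}"
    unfolding fano_polytope_def by blast
  define Q where "Q = P \<inter> lattice3 - {\<rho>}"
  have bP: "bounded P" using V by (simp add: bounded_convex_hull finite_imp_bounded)
  have cP: "convex P" using V by simp
  have fQ: "finite Q" unfolding Q_def using bounded_lattice_finite[OF bP] by auto
  have QP: "convex hull Q \<subseteq> P" unfolding Q_def by (rule hull_minimal) (use cP in auto)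
  have z0: "0 \<in> interior P" using I by auto
  have "\<rho> \<noteq> 0" using extreme_point_not_in_interior[OF assms(2)] z0 by auto
  then have "0 \<in> Q" unfolding Q_def using z0 interior_subset lattice3_zero by auto
  then have zK: "0 \<in> convex hull Q" by (simp add: hull_inc)
  have "0 \<notin> interior (convex hull Q)"
  proof
    assume i: "0 \<in> interior (convex hull Q)"
    have "fano_polytope (convex hull Q)"
      unfolding fano_polytope_def
    proof (intro conjI)
      show "\<exists>V. finite V \<and> V \<subseteq> lattice3 \<and> convex hull Q = convex hull V"
        using fQ unfolding Q_def by blast
      show "aff_dim (convex hull Q) = 3" using aff_dim_nonempty_interior[of "convex hull Q"] i by auto
      have "interior (convex hull Q) \<subseteq> interior P" using QP by (rule interior_mono)
      then show "interior (convex hull Q) \<inter> lattice3 = {0}" using I i lattice3_zero by auto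
    qed
    then show False using nF unfolding Q_def by simp
  qed
  then obtain n where "n \<noteq> 0" "\<forall>x\<in>convex hull Q. 0 \<le> n \<bullet> x"
    using sep0[OF convex_convex_hull zK] by blast
  then show ?thesis unfolding Q_def[symmetric] using hull_inc by (metis (no_types, lifting))
qed

lemma span2: "x \<in> span {a, b} \<longleftrightarrow> (\<exists>u v. x = u *\<^sub>R a + v *\<^sub>R b)"
proof
  assume "x \<in> span {a, b}"
  then obtain k where "x - k *\<^sub>R a \<in> span {b}" using span_breakdown_eq by blast
  then obtain j where "x - k *\<^sub>R a = j *\<^sub>R b" by (auto simp: span_singleton)
  then have "x = k *\<^sub>R a + j *\<^sub>R b" by (simp add: algebra_simps)
  then show "\<exists>u v. x = u *\<^sub>R a + v *\<^sub>R b" by blast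
next
  assume "\<exists>u v. x = u *\<^sub>R a + v *\<^sub>R b"
  then obtain u v where "x = u *\<^sub>R a + v *\<^sub>R b" by blast
  then show "x \<in> span {a, b}" by (simp add: span_add span_scale span_base)
qed

lemma span3: "x \<in> span {a, b, c} \<longleftrightarrow> (\<exists>u v w. x = u *\<^sub>R a + v *\<^sub>R b + w *\<^sub>R c)"
proof
  assume "x \<in> span {a, b, c}"
  then obtain k where "x - k *\<^sub>R a \<in> span {b, c}" using span_breakdown_eq by blast
  then obtain j l where "x - k *\<^sub>R a = j *\<^sub>R b + l *\<^sub>R c" using span2 by blast
  then have "x = k *\<^sub>R a + j *\<^sub>R b + l *\<^sub>R c" by (simp add: algebra_simps)
  then show "\<exists>u v w. x = u *\<^sub>R a + v *\<^sub>R b + w *\<^sub>R c" by blast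
next
  assume "\<exists>u v w. x = u *\<^sub>R a + v *\<^sub>R b + w *\<^sub>R c"
  then obtain u v w where "x = u *\<^sub>R a + v *\<^sub>R b + w *\<^sub>R c" by blast
  then show "x \<in> span {a, b, c}" by (simp add: span_add span_scale span_base)
qed

lemma basis3:
  fixes a b t :: "real^3"
  assumes ind: "\<And>u v. u *\<^sub>R a + v *\<^sub>R b = 0 \<Longrightarrow> u = 0 \<and> v = 0"
    and nt: "\<not>(\<exists>u v. t = u *\<^sub>R a + v *\<^sub>R b)"
  shows "\<And>u v w. u *\<^sub>R a + v *\<^sub>R b + w *\<^sub>R t = 0 \<Longrightarrow> u = 0 \<and> v = 0 \<and> w = 0"
    and "\<exists>u v w. x = u *\<^sub>R a + v *\<^sub>R b + w *\<^sub>R t"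
proof -
  show I: "u = 0 \<and> v = 0 \<and> w = 0" if "u *\<^sub>R a + v *\<^sub>R b + w *\<^sub>R t = 0" for u v w
  proof (cases "w = 0")
    case True then show ?thesis using that ind by auto
  next
    case False
    have c: "u * a$i + v * b$i + w * t$i = 0" for i
      using that by (simp add: vec_eq_iff)
    have "t = (- u / w) *\<^sub>R a + (- v / w) *\<^sub>R b"
    proof -
      have "t$i = (- u / w) * a$i + (- v / w) * b$i" for i
        using c[of i] False by (simp add: field_simps)
      then show ?thesis by (simp add: vec_eq_iff)
    qed
    then show ?thesis using nt by blast
  qed
  have b0: "b \<noteq> 0" using ind[of 0 1] by auto
  have ab: "a \<notin> span {b}"
  proof
    assume "a \<in> span {b}"
    then obtain k where "a = k *\<^sub>R b" by (auto simp: span_singleton)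
    then have "1 *\<^sub>R a + (-k) *\<^sub>R b = 0" by simp
    then show False using ind by fastforce
  qed
  have ibb: "independent {b}" using b0 by simp
  have iab: "independent {a, b}" using ab ibb by (rule independent_insertI)
  have tab: "t \<notin> span {a, b}" using nt span2 by blast
  have it: "independent {t, a, b}" using tab iab by (rule independent_insertI)
  have sa: "a \<in> span {a,b}" "b \<in> span {a,b}" "b \<in> span {b}" by (simp_all add: span_base)
  have ta: "t \<noteq> a" "t \<noteq> b" "a \<noteq> b"
  proof -
    show "t \<noteq> a" using tab sa(1) by metis
    show "t \<noteq> b" using tab sa(2) by metis
    show "a \<noteq> b" using ab sa(3) by metis
  qed
  have "card {t, a, b} = dim (UNIV :: (real^3) set)" using ta by simp
  then have "UNIV \<subseteq> span {t, a, b}" using card_eq_dim[of "{t,a,b}" UNIV] it by simp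
  then have "x \<in> span {t, a, b}" by blast
  then obtain w u v where "x = w *\<^sub>R t + u *\<^sub>R a + v *\<^sub>R b" using span3 by blast
  then have "x = u *\<^sub>R a + v *\<^sub>R b + w *\<^sub>R t" by (simp add: algebra_simps)
  then show "\<exists>u v w. x = u *\<^sub>R a + v *\<^sub>R b + w *\<^sub>R t" by blast
qed

lemma orth3:
  fixes a b t n :: "real^3"
  assumes "\<And>x. \<exists>u v w. x = u *\<^sub>R a + v *\<^sub>R b + w *\<^sub>R t"
    and "n \<bullet> a = 0" "n \<bullet> b = 0" "n \<bullet> t = 0"
  shows "n = 0"
proof -
  obtain u v w where "n = u *\<^sub>R a + v *\<^sub>R b + w *\<^sub>R t" using assms(1) by blast
  then have "n \<bullet> n = 0" using assms(2-4) by (simp add: inner_add_right)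
  then show ?thesis by simp
qed

lemma zero_trick:
  fixes n x y :: "real^3"
  assumes "0 \<le> n \<bullet> x" "0 \<le> n \<bullet> y" "0 \<le> n \<bullet> (-2 *\<^sub>R x - y)"
  shows "n \<bullet> x = 0" "n \<bullet> y = 0"
  using assms by (simp_all add: inner_diff_right)

lemma a_in_L2:
  fixes P :: "(real^3) set" and a b s t :: "real^3"
  assumes K: "\<And>\<rho>. \<rho> extreme_point_of P \<Longrightarrow> \<exists>n. n \<noteq> 0 \<and> (\<forall>q\<in>P \<inter> lattice3 - {\<rho>}. 0 \<le> n \<bullet> q)"
    and cP: "convex P"
    and lat: "a \<in> lattice3" "b \<in> lattice3" "s \<in> lattice3" "t \<in> lattice3"
    and inP: "a \<in> P" "b \<in> P" "-2 *\<^sub>R a - b \<in> P" "s \<in> P" "t \<in> P" "-2 *\<^sub>R s - t \<in> P"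
    and ext: "b extreme_point_of P" "(-2 *\<^sub>R a - b) extreme_point_of P"
    and indab: "\<And>u v. u *\<^sub>R a + v *\<^sub>R b = 0 \<Longrightarrow> u = 0 \<and> v = 0"
    and indst: "\<And>u v. u *\<^sub>R s + v *\<^sub>R t = 0 \<Longrightarrow> u = 0 \<and> v = 0"
    and nbc: "\<not> ((\<exists>u v. b = u *\<^sub>R s + v *\<^sub>R t) \<and> (\<exists>u v. -2 *\<^sub>R a - b = u *\<^sub>R s + v *\<^sub>R t))"
  shows "\<exists>u v. a = u *\<^sub>R s + v *\<^sub>R t"
proof -
  define c where "c = -2 *\<^sub>R a - b"
  define r where "r = -2 *\<^sub>R s - t"
  have ma: "-a = (1/2) *\<^sub>R b + (1/2) *\<^sub>R c" unfolding c_def by (simp add: vec_eq_iff field_simps)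
  have maP: "-a \<in> P" unfolding ma using cP inP(2,3) unfolding c_def by (intro convexD) auto
  have lat': "-a \<in> lattice3" "r \<in> lattice3" unfolding r_def
    using lat by (auto intro!: lattice3_uminus lattice3_diff lattice3_scale)
  have key: "\<exists>u v. a = u *\<^sub>R s + v *\<^sub>R t"
    if rho: "\<rho> extreme_point_of P" "\<rho> \<noteq> s" "\<rho> \<noteq> t" "\<rho> \<noteq> r" "\<rho> \<noteq> a" "\<rho> \<noteq> -a" for \<rho>
  proof (rule ccontr)
    assume na: "\<not> (\<exists>u v. a = u *\<^sub>R s + v *\<^sub>R t)"
    obtain n where n: "n \<noteq> 0" "\<forall>q\<in>P \<inter> lattice3 - {\<rho>}. 0 \<le> n \<bullet> q" using K[OF rho(1)] by blast
    have mem: "a \<in> P \<inter> lattice3 - {\<rho>}" "-a \<in> P \<inter> lattice3 - {\<rho>}" "s \<in> P \<inter> lattice3 - {\<rho>}"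
      "t \<in> P \<inter> lattice3 - {\<rho>}" "r \<in> P \<inter> lattice3 - {\<rho>}"
      using rho lat lat' inP maP unfolding r_def by auto
    have "0 \<le> n \<bullet> a" "0 \<le> n \<bullet> (-a)" "0 \<le> n \<bullet> s" "0 \<le> n \<bullet> t" "0 \<le> n \<bullet> r"
      using n(2) mem by blast+
    then have "n \<bullet> a = 0" "n \<bullet> s = 0" "n \<bullet> t = 0"
      using zero_trick[of n s t] unfolding r_def by auto
    moreover have "\<exists>u v w. x = u *\<^sub>R s + v *\<^sub>R t + w *\<^sub>R a" for x
      using basis3(2)[OF indst na] by blast
    ultimately have "n = 0" using orth3[of s t a n] by blast
    then show False using n(1) by simp
  qed
  have ab: "b \<noteq> a" "b \<noteq> -a" "c \<noteq> a" "c \<noteq> -a"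
  proof -
    show "b \<noteq> a" using indab[of 1 "-1"] by auto
    show "b \<noteq> -a" using indab[of 1 1] by auto
    show "c \<noteq> a" proof assume "c = a" then have "3 *\<^sub>R a + 1 *\<^sub>R b = 0" unfolding c_def by (simp add: vec_eq_iff) (metis add.commute neg_eq_iff_add_eq_0)
      then show False using indab by fastforce qed
    show "c \<noteq> -a" proof assume "c = -a" then have "1 *\<^sub>R a + 1 *\<^sub>R b = 0" unfolding c_def by (simp add: vec_eq_iff) (metis add.commute neg_eq_iff_add_eq_0)
      then show False using indab by fastforce qed
  qed
  have inL2: "\<exists>u v. x = u *\<^sub>R s + v *\<^sub>R t" if "x \<in> {s, t, r}" for x
  proof -
    have "s = 1 *\<^sub>R s + 0 *\<^sub>R t" "t = 0 *\<^sub>R s + 1 *\<^sub>R t" "r = (-2) *\<^sub>R s + (-1) *\<^sub>R t"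
      unfolding r_def by simp_all
    then show ?thesis using that by blast
  qed
  show ?thesis
  proof (cases "b \<in> {s, t, r}")
    case False then show ?thesis using key[of b] ext(1) ab by auto
  next
    case True
    then have "c \<notin> {s, t, r}" using nbc inL2 unfolding c_def by blast
    then show ?thesis using key[of c] ext(2) ab unfolding c_def by auto
  qed
qed

lemma sub_eq:
  fixes L1 L2 :: "(real^3) set"
  assumes "subspace L1" "subspace L2" "dim L1 = 2" "dim L2 = 2"
    and "\<And>x. x \<in> L1 \<longleftrightarrow> (\<exists>u v. x = u *\<^sub>R a + v *\<^sub>R b)" "a \<in> L2" "b \<in> L2"
  shows "L1 = L2"
proof -
  have "L1 \<subseteq> L2"
  proof
    fix x assume "x \<in> L1"
    then obtain u v where "x = u *\<^sub>R a + v *\<^sub>R b" using assms(5) by blast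
    then show "x \<in> L2" using assms(2,6,7) by (simp add: subspace_add subspace_scale)
  qed
  then show ?thesis using subspace_dim_equal[of L1 L2] assms(1-4) by simp
qed

definition colmat :: "real^3 \<Rightarrow> real^3 \<Rightarrow> real^3 \<Rightarrow> real^3^3" where
  "colmat p q r = transpose (vector [p, q, r])"

lemma colmat_mult: "colmat p q r *v y = y$1 *\<^sub>R p + y$2 *\<^sub>R q + y$3 *\<^sub>R r"
  by (simp add: colmat_def vec_eq_iff matrix_vector_mult_def transpose_def sum_3 algebra_simps)

lemma det_int: "(\<forall>i j. (A::real^3^3)$i$j \<in> \<int>) \<Longrightarrow> det A \<in> \<int>"
  unfolding det_3 by (intro Ints_diff Ints_add Ints_mult) auto

lemma gl_lemma:
  fixes p q r :: "real^3"
  assumes lat: "p \<in> lattice3" "q \<in> lattice3" "r \<in> lattice3"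
    and cov: "\<And>x. x \<in> lattice3 \<Longrightarrow> \<exists>w. w \<in> lattice3 \<and> x = w$1 *\<^sub>R p + w$2 *\<^sub>R q + w$3 *\<^sub>R r"
  shows "colmat p q r \<in> GL3Z"
proof -
  define M where "M = colmat p q r"
  have Mi: "\<forall>i j. M$i$j \<in> \<int>"
    using lat unfolding M_def colmat_def by (auto simp: lattice3_def transpose_def forall_3)
  have e: "vector[1,0,0] \<in> lattice3" "vector[0,1,0] \<in> lattice3" "vector[0,0,1] \<in> lattice3"
    by (simp_all add: lattice3_iff)
  obtain w1 where w1: "w1 \<in> lattice3" "(vector[1,0,0]::real^3) = M *v w1"
    using cov[OF e(1)] unfolding M_def colmat_mult by metis
  obtain w2 where w2: "w2 \<in> lattice3" "(vector[0,1,0]::real^3) = M *v w2"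
    using cov[OF e(2)] unfolding M_def colmat_mult by metis
  obtain w3 where w3: "w3 \<in> lattice3" "(vector[0,0,1]::real^3) = M *v w3"
    using cov[OF e(3)] unfolding M_def colmat_mult by metis
  define K where "K = colmat w1 w2 w3"
  have Ki: "\<forall>i j. K$i$j \<in> \<int>"
    using w1 w2 w3 unfolding K_def colmat_def by (auto simp: lattice3_def transpose_def forall_3)
  have "M ** K = mat 1"
  proof (subst matrix_eq, intro allI)
    fix y :: "real^3"
    have "(M ** K) *v y = M *v (K *v y)" by (simp add: matrix_vector_mul_assoc)
    also have "K *v y = y$1 *\<^sub>R w1 + y$2 *\<^sub>R w2 + y$3 *\<^sub>R w3" unfolding K_def colmat_mult ..
    also have "M *v \<dots> = y$1 *\<^sub>R (M *v w1) + y$2 *\<^sub>R (M *v w2) + y$3 *\<^sub>R (M *v w3)"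
      by (simp add: matrix_vector_right_distrib matrix_vector_mult_scaleR)
    also have "\<dots> = y" unfolding w1(2)[symmetric] w2(2)[symmetric] w3(2)[symmetric]
      by (simp add: vec_eq_iff forall_3)
    finally show "(M ** K) *v y = mat 1 *v y" by simp
  qed
  then have "det M * det K = 1" using det_mul[of M K] by simp
  moreover obtain I where I: "det M = of_int I" using det_int[OF Mi] Ints_cases by blast
  moreover obtain I' where I': "det K = of_int I'" using det_int[OF Ki] Ints_cases by blast
  ultimately have "I * I' = 1" by (metis of_int_eq_1_iff of_int_mult)
  then have "I = 1 \<or> I = -1" by (rule pos_zmult_eq_1_iff_lemma)
  then have "\<bar>det M\<bar> = 1" using I by auto
  then show ?thesis using Mi unfolding GL3Z_def M_def by blast
qed

lemma facetA:
  fixes x y z :: real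
  assumes "x - 3*y + z \<le> 1" "x + y + z \<le> 1" "x + y - 3*z \<le> 1" "x - 3*y - 3*z \<le> 1" "- x + y + z \<le> 1"
  shows "vector[x, y, z] \<in> polytopeA"
proof -
  define S where "S = (1 - x - y - z) / 4"
  define yn where "yn = max 0 (-y)"
  define zn where "zn = max 0 (-z)"
  define u3 where "u3 = yn + (S - yn - zn) / 2"
  define u5 where "u5 = zn + (S - yn - zn) / 2"
  have Sge: "S \<ge> yn + zn" unfolding S_def yn_def zn_def using assms by (simp add: max_def)
  define lam :: "nat \<Rightarrow> real" where "lam = (\<lambda>i. if i = 1 then x + 2*u3 + 2*u5 else if i = 2 then y + u3
      else if i = 3 then u3 else if i = 4 then z + u5 else u5)"
  define pt :: "nat \<Rightarrow> real^3" where "pt = (\<lambda>i. if i = 1 then vector[1,0,0] else if i = 2 then vector[0,1,0]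
      else if i = 3 then vector[-2,-1,0] else if i = 4 then vector[0,0,1] else vector[-2,0,-1])"
  have nn: "0 \<le> lam i" if "i \<in> {1,2,3,4,5}" for i
  proof -
    have "u3 \<ge> yn" "u5 \<ge> zn" "yn \<ge> 0" "zn \<ge> 0" "yn \<ge> -y" "zn \<ge> -z" using Sge unfolding u3_def u5_def yn_def zn_def by auto
    moreover have "x + 2*u3 + 2*u5 \<ge> 0" unfolding u3_def u5_def S_def using assms by (simp add: field_simps)
    ultimately show ?thesis using that unfolding lam_def by auto
  qed
  have q1: "(\<Sum>i\<in>{1,2,3,4,5}. lam i) = 1" unfolding lam_def u3_def u5_def S_def by (simp add: field_simps)
  have q2: "(\<Sum>i\<in>{1,2,3,4,5}. lam i *\<^sub>R pt i) = vector[x, y, z]"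
    unfolding lam_def pt_def u3_def u5_def S_def by (simp add: vec_eq_iff forall_3 field_simps)
  have "(\<Sum>i\<in>{1,2,3,4,5}. lam i *\<^sub>R pt i) \<in> polytopeA"
    unfolding polytopeA_def
    by (rule convex_sum) (use nn q1 in \<open>auto simp: pt_def intro: hull_inc\<close>)
  then show ?thesis using q2 by simp
qed



lemma coord_part:
  fixes P :: "(real^3) set" and a b t n :: "real^3"
  assumes lat: "a \<in> lattice3" "b \<in> lattice3" "t \<in> lattice3"
    and uniq: "\<And>u v w. u *\<^sub>R a + v *\<^sub>R b + w *\<^sub>R t = 0 \<Longrightarrow> u = 0 \<and> v = 0 \<and> w = 0"
    and spanning: "\<And>x. \<exists>u v w. x = u *\<^sub>R a + v *\<^sub>R b + w *\<^sub>R t"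
    and sat: "\<And>x. x \<in> lattice3 \<Longrightarrow> (\<exists>u v. x = u *\<^sub>R a + v *\<^sub>R b) \<Longrightarrow> \<exists>u v. u \<in> \<int> \<and> v \<in> \<int> \<and> x = u *\<^sub>R a + v *\<^sub>R b"
    and P: "P = convex hull {a, b, -2 *\<^sub>R a - b, t, -2 *\<^sub>R a - t}"
    and H: "n \<bullet> a = 0" "n \<bullet> b = 0" "n \<bullet> t < 0" "\<forall>q \<in> P \<inter> lattice3 - {t}. 0 \<le> n \<bullet> q"
    and fano: "interior P \<inter> lattice3 = {0}"
  shows "GL3Z_equivalent P polytopeA \<or> GL3Z_equivalent P polytopeB"
proof -
  define phi where "phi = (\<lambda>y. colmat a b t *v y)"
  have phie: "phi y = y$1 *\<^sub>R a + y$2 *\<^sub>R b + y$3 *\<^sub>R t" for y unfolding phi_def by (rule colmat_mult)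
  have lin: "linear phi" unfolding phi_def by (rule matrix_vector_mul_linear)
  have phiv: "phi (vector[x,y,z]) = x *\<^sub>R a + y *\<^sub>R b + z *\<^sub>R t" for x y z by (simp add: phie)
  have phid: "phi (y - z) = phi y - phi z" "phi (c *\<^sub>R y) = c *\<^sub>R phi y" "phi (y + z) = phi y + phi z" for y z c
    using lin by (simp_all add: linear_diff linear_cmul linear_add)
  have inj: "y = z" if "phi y = phi z" for y z
  proof -
    have "phi (y - z) = 0" using that phid by simp
    then have "(y-z)$1 = 0 \<and> (y-z)$2 = 0 \<and> (y-z)$3 = 0" using uniq unfolding phie by blast
    then show ?thesis by (simp add: vec3_eq)
  qed
  have PA: "P = phi ` polytopeA"
  proof -
    have "phi ` polytopeA = convex hull (phi ` {vector [1,0,0], vector [0,1,0], vector [0,0,1],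
                            vector [-2,-1,0], vector [-2,0,-1]})"
      unfolding polytopeA_def by (rule convex_hull_linear_image[OF lin])
    also have "phi ` {vector [1,0,0], vector [0,1,0], vector [0,0,1], vector [-2,-1,0], vector [-2,0,-1]}
       = {a, b, -2 *\<^sub>R a - b, t, -2 *\<^sub>R a - t}"
    proof -
      have "phi (vector[-2,-1,0]) = -2 *\<^sub>R a - b" "phi (vector[-2,0,-1]) = -2 *\<^sub>R a - t"
        "phi (vector[1,0,0]) = a" "phi (vector[0,1,0]) = b" "phi (vector[0,0,1]) = t"
        by (simp_all add: phiv vec_eq_iff)
      then show ?thesis by (simp add: insert_commute)
    qed
    finally show ?thesis using P by simp
  qed
  define Lam where "Lam = (\<lambda>y. phi y \<in> lattice3)"
  have Lint: "Lam y" if "y \<in> lattice3" for y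
  proof -
    have "y$1 \<in> \<int>" "y$2 \<in> \<int>" "y$3 \<in> \<int>" using that by (simp_all add: lattice3_iff)
    then show ?thesis unfolding Lam_def phie by (intro lattice3_add lattice3_scale lat)
  qed
  have Ldiff: "Lam (y - z)" if "Lam y" "Lam z" for y z
    using that unfolding Lam_def phid by (rule lattice3_diff)
  have Lscale: "Lam (c *\<^sub>R y)" if "c \<in> \<int>" "Lam y" for c y
    using that unfolding Lam_def phid by (rule lattice3_scale)
  have sat3: "y$1 \<in> \<int> \<and> y$2 \<in> \<int>" if "Lam y" "y$3 = 0" for y
  proof -
    have e: "phi y = y$1 *\<^sub>R a + y$2 *\<^sub>R b" using that(2) by (simp add: phie)
    have ex: "\<exists>u v. phi y = u *\<^sub>R a + v *\<^sub>R b" using e by blast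
    have ly: "phi y \<in> lattice3" using that(1) unfolding Lam_def .
    obtain u v where uv: "u \<in> \<int>" "v \<in> \<int>" "phi y = u *\<^sub>R a + v *\<^sub>R b"
      using sat[OF ly ex] by blast
    have "(y$1 - u) *\<^sub>R a + (y$2 - v) *\<^sub>R b + 0 *\<^sub>R t = (y$1 *\<^sub>R a + y$2 *\<^sub>R b) - (u *\<^sub>R a + v *\<^sub>R b)"
      by (simp add: vec_eq_iff algebra_simps)
    also have "\<dots> = 0" using e uv(3) by simp
    finally have "y$1 - u = 0 \<and> y$2 - v = 0" using uniq by blast
    then show ?thesis using uv by simp
  qed
  have H1: False if "Lam y" "y \<in> polytopeA" "0 < y$3" "y$3 < 1" for y
  proof -
    have "phi y \<in> P" using PA that(2) by blast
    moreover have "phi y \<noteq> t"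
    proof
      assume "phi y = t"
      then have "phi y = phi (vector[0,0,1])" by (simp add: phiv)
      then have "y = vector[0,0,1]" by (rule inj)
      then show False using that(4) by simp
    qed
    ultimately have "0 \<le> n \<bullet> phi y" using H(4) that(1) unfolding Lam_def by blast
    also have "n \<bullet> phi y = y$3 * (n \<bullet> t)" unfolding phie using H(1,2) by (simp add: inner_add_right)
    finally have "0 \<le> y$3 * (n \<bullet> t)" .
    moreover have "y$3 * (n \<bullet> t) < 0" using that(3) H(3) by (simp add: mult_pos_neg)
    ultimately show False by simp
  qed
  define S where "S = {y. Lam y \<and> 0 < y$3 \<and> y$3 \<le> 1 \<and> 0 \<le> y$1 \<and> y$1 \<le> 1 \<and> 0 \<le> y$2 \<and> y$2 \<le> 1}"
  have finS: "finite S"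
  proof -
    have "S \<subseteq> cbox 0 (vector[1,1,1])" unfolding S_def by (auto simp: mem_box_cart forall_3)
    then have "bounded S" using bounded_cbox bounded_subset by blast
    then have "bounded (phi ` S)" using bounded_linear_image lin linear_conv_bounded_linear by blast
    then have "finite (phi ` S \<inter> lattice3)" by (rule bounded_lattice_finite)
    moreover have "phi ` S \<inter> lattice3 = phi ` S" unfolding S_def Lam_def by auto
    ultimately have "finite (phi ` S)" by simp
    moreover have "inj_on phi S" using inj by (auto simp: inj_on_def)
    ultimately show ?thesis using finite_imageD by blast
  qed
  have e3S: "vector[0,0,1] \<in> S" unfolding S_def Lam_def using lat by (simp add: phiv)
  define g0 where "g0 = Min ((\<lambda>y. y$3) ` S)"
  have "g0 \<in> (\<lambda>y. y$3) ` S" unfolding g0_def using finS e3S by (intro Min_in) auto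
  then obtain g where g: "g \<in> S" "g$3 = g0" by auto
  have minS: "g0 \<le> y$3" if "y \<in> S" for y unfolding g0_def using finS that by (intro Min_le) auto
  have minL: "g0 \<le> y$3" if "Lam y" "0 < y$3" for y
  proof -
    define d where "d = (vector[of_int \<lfloor>y$1\<rfloor>, of_int \<lfloor>y$2\<rfloor>, of_int \<lceil>y$3\<rceil> - 1] :: real^3)"
    have "d \<in> lattice3" unfolding d_def by (simp add: lattice3_iff)
    then have "Lam (y - d)" using Ldiff Lint that(1) by blast
    moreover have "\<lceil>y$3\<rceil> \<ge> 1" using that(2) by linarith
    ultimately have "y - d \<in> S" unfolding S_def d_def
      by (simp; linarith)
    then have "g0 \<le> (y - d)$3" by (rule minS)
    also have "(y - d)$3 \<le> y$3" unfolding d_def using \<open>\<lceil>y$3\<rceil> \<ge> 1\<close> by simp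
    finally show ?thesis .
  qed
  have g0b: "0 < g0" "g0 \<le> 1" using g unfolding S_def by auto
  have Lg: "Lam g" using g unfolding S_def by auto
  have Le3: "Lam (vector[0,0,1])" using e3S unfolding S_def by auto
  define N where "N = \<lfloor>1 / g0\<rfloor>"
  have "1 \<le> 1 / g0" using g0b by (simp add: field_simps)
  then have N1: "N \<ge> 1" unfolding N_def by (simp add: le_floor_iff)
  have Ng: "real_of_int N * g0 = 1"
  proof -
    define y where "y = vector[0,0,1] - real_of_int N *\<^sub>R g"
    have Ly: "Lam y" unfolding y_def by (intro Ldiff Lscale Le3 Lg) simp
    have y3: "y$3 = 1 - real_of_int N * g0" unfolding y_def using g by simp
    have "real_of_int N \<le> 1 / g0" "1 / g0 < real_of_int N + 1" unfolding N_def by linarith+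
    then have "real_of_int N * g0 \<le> 1" "1 < (real_of_int N + 1) * g0"
      using g0b by (simp_all add: field_simps)
    then have "0 \<le> y$3" "y$3 < g0" unfolding y3 by (simp_all add: algebra_simps)
    moreover have "\<not> 0 < y$3" using minL[OF Ly] \<open>y$3 < g0\<close> by fastforce
    ultimately show ?thesis using y3 by simp
  qed
  have Npos: "real_of_int N > 0" using N1 by simp
  have g3: "g$3 = 1 / real_of_int N" using Ng g(2) Npos by (simp add: field_simps)
  obtain J K :: int where JK: "g$1 = of_int J / of_int N" "g$2 = of_int K / of_int N"
  proof -
    define y where "y = real_of_int N *\<^sub>R g - vector[0,0,1]"
    have Ly: "Lam y" unfolding y_def by (intro Ldiff Lscale Le3 Lg) simp
    have "y$3 = 0" unfolding y_def using g3 Npos by simp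
    then have "y$1 \<in> \<int>" "y$2 \<in> \<int>" using sat3[OF Ly] by auto
    then obtain J K where "y$1 = of_int J" "y$2 = of_int K" by (metis Ints_cases)
    then have "g$1 = of_int J / of_int N" "g$2 = of_int K / of_int N"
      unfolding y_def using Npos by (simp_all add: field_simps)
    then show ?thesis using that by blast
  qed
  have decomp: "\<exists>k z1 z2. y = of_int k *\<^sub>R g + vector[of_int z1, of_int z2, 0]" if "Lam y" for y
  proof -
    define k where "k = \<lfloor>real_of_int N * y$3\<rfloor>"
    define w where "w = y - of_int k *\<^sub>R g"
    have Lw: "Lam w" unfolding w_def by (intro Ldiff Lscale that Lg) simp
    have w3: "w$3 = y$3 - of_int k / real_of_int N" unfolding w_def using g3 by simp
    have "of_int k \<le> real_of_int N * y$3" "real_of_int N * y$3 < of_int k + 1" unfolding k_def by linarith+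
    then have kk: "0 \<le> real_of_int N * y$3 - of_int k" "real_of_int N * y$3 - of_int k < 1" by linarith+
    have wq: "w$3 = (real_of_int N * y$3 - of_int k) / real_of_int N" using w3 Npos by (simp add: field_simps)
    have "0 \<le> w$3" unfolding wq using kk Npos by simp
    moreover have "w$3 < g0" unfolding wq g(2)[symmetric] g3 using kk Npos by (simp add: divide_strict_right_mono)
    moreover have "\<not> 0 < w$3" using minL[OF Lw] \<open>w$3 < g0\<close> by fastforce
    ultimately have "w$3 = 0" by simp
    then obtain z1 z2 where "w$1 = of_int z1" "w$2 = of_int z2" using sat3[OF Lw] by (metis Ints_cases)
    then have "w = vector[of_int z1, of_int z2, 0]" using \<open>w$3 = 0\<close> by (simp add: vec3_eq)
    then show ?thesis unfolding w_def by (metis diff_add_cancel add.commute)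
  qed
  have NC: "N = 1 \<or> (N = 2 \<and> J mod 2 = 1 \<and> K mod 2 = 1)"
  proof (rule ccontr)
    assume nc: "\<not> ?thesis"
    then have "2 \<le> N" "(N, J mod N, K mod N) \<noteq> (2,1,1)" using N1 by auto
    moreover have "0 \<le> J mod N" "J mod N < N" "0 \<le> K mod N" "K mod N < N" using N1 by simp_all
    ultimately have "good N (J mod N) (K mod N)" by (intro good_all) auto
    then obtain m X Y where mXY: "1 \<le> m" "m < N" "N dvd (X - m * (J mod N))" "N dvd (Y - m * (K mod N))"
      "inAi N X Y m" unfolding good_def by blast
    have "N dvd (m * J - X)"
    proof -
      have "N dvd m * (J - J mod N)" by (simp add: minus_mod_eq_mult_div[symmetric])
      moreover have "m * J - X = m * (J - J mod N) - (X - m * (J mod N))" by (simp add: algebra_simps)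
      ultimately show ?thesis using mXY(3) by (metis dvd_diff)
    qed
    then obtain q1 where q1: "m * J - X = N * q1" by (auto simp: dvd_def)
    have "N dvd (m * K - Y)"
    proof -
      have "N dvd m * (K - K mod N)" by (simp add: minus_mod_eq_mult_div[symmetric])
      moreover have "m * K - Y = m * (K - K mod N) - (Y - m * (K mod N))" by (simp add: algebra_simps)
      ultimately show ?thesis using mXY(4) by (metis dvd_diff)
    qed
    then obtain q2 where q2: "m * K - Y = N * q2" by (auto simp: dvd_def)
    define y where "y = (vector[of_int X / of_int N, of_int Y / of_int N, of_int m / of_int N] :: real^3)"
    have "y = of_int m *\<^sub>R g - vector[of_int q1, of_int q2, 0]"
    proof -
      have "real_of_int X = of_int m * of_int J - of_int N * of_int q1"
        using arg_cong[OF q1, of real_of_int] by simp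
      moreover have "real_of_int Y = of_int m * of_int K - of_int N * of_int q2"
        using arg_cong[OF q2, of real_of_int] by simp
      ultimately show ?thesis unfolding y_def using JK g3 Npos by (simp add: vec3_eq field_simps)
    qed
    moreover have "Lam (real_of_int m *\<^sub>R g)" using Lscale Lg by simp
    moreover have "Lam (vector[real_of_int q1, real_of_int q2, 0])" by (rule Lint) (simp add: lattice3_iff)
    ultimately have Ly: "Lam y" using Ldiff by simp
    have yA: "y \<in> polytopeA" unfolding y_def
    proof (rule facetA)
      have f: "X - 3*Y + m \<le> N" "X + Y + m \<le> N" "X + Y - 3*m \<le> N" "X - 3*Y - 3*m \<le> N" "- X + Y + m \<le> N"
        using mXY(5) unfolding inAi_def by auto
      have r: "real_of_int X - 3*real_of_int Y + real_of_int m \<le> real_of_int N"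
         "real_of_int X + real_of_int Y + real_of_int m \<le> real_of_int N"
         "real_of_int X + real_of_int Y - 3*real_of_int m \<le> real_of_int N"
         "real_of_int X - 3*real_of_int Y - 3*real_of_int m \<le> real_of_int N"
         "- real_of_int X + real_of_int Y + real_of_int m \<le> real_of_int N"
        using f by linarith+
      have d: "\<And>A. A \<le> real_of_int N \<Longrightarrow> A / real_of_int N \<le> 1" using Npos by simp
      show "of_int X / of_int N - 3 * (of_int Y / of_int N) + of_int m / of_int N \<le> (1::real)"
        using d[OF r(1)] by (simp add: diff_divide_distrib add_divide_distrib)
      show "of_int X / of_int N + of_int Y / of_int N + of_int m / of_int N \<le> (1::real)"
        using d[OF r(2)] by (simp add: diff_divide_distrib add_divide_distrib)
      show "of_int X / of_int N + of_int Y / of_int N - 3 * (of_int m / of_int N) \<le> (1::real)"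
        using d[OF r(3)] by (simp add: diff_divide_distrib add_divide_distrib)
      show "of_int X / of_int N - 3 * (of_int Y / of_int N) - 3 * (of_int m / of_int N) \<le> (1::real)"
        using d[OF r(4)] by (simp add: diff_divide_distrib add_divide_distrib)
      show "- (of_int X / of_int N) + of_int Y / of_int N + of_int m / of_int N \<le> (1::real)"
        using d[OF r(5)] by (simp add: diff_divide_distrib add_divide_distrib)
    qed
    have "0 < y$3" "y$3 < 1" unfolding y_def using mXY(1,2) Npos by (simp_all add: field_simps)
    then show False using H1[OF Ly yA] by simp
  qed
  have preimg: "\<exists>y. Lam y \<and> phi y = x \<and> y = vector[y$1, y$2, y$3]" if "x \<in> lattice3" for x
  proof -
    obtain u v w where "x = u *\<^sub>R a + v *\<^sub>R b + w *\<^sub>R t" using spanning by blast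
    then have "phi (vector[u,v,w]) = x" by (simp add: phiv)
    then show ?thesis using that unfolding Lam_def by (intro exI[of _ "vector[u,v,w]"]) simp
  qed
  show ?thesis
  proof (cases "N = 1")
    case True
    have gl: "g \<in> lattice3" using JK g3 True by (simp add: lattice3_iff)
    have intL: "y \<in> lattice3" if Ly: "Lam y" for y
    proof -
      obtain k z1 z2 where "y = of_int k *\<^sub>R g + vector[of_int z1, of_int z2, 0]" using decomp[OF Ly] by blast
      then show ?thesis using gl by (auto intro!: lattice3_add lattice3_scale simp: lattice3_iff)
    qed
    have "colmat a b t \<in> GL3Z"
    proof (rule gl_lemma[OF lat])
      fix x assume "x \<in> lattice3"
      then obtain y where "Lam y" "phi y = x" using preimg by blast
      then show "\<exists>w. w \<in> lattice3 \<and> x = w$1 *\<^sub>R a + w$2 *\<^sub>R b + w$3 *\<^sub>R t"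
        using intL phie by blast
    qed
    moreover have "P = (\<lambda>x. colmat a b t *v x) ` polytopeA" using PA unfolding phi_def .
    ultimately show ?thesis unfolding GL3Z_equivalent_def by blast
  next
    case False
    then have N2: "N = 2" "J mod 2 = 1" "K mod 2 = 1" using NC by auto
    define J' where "J' = J div 2"
    define K' where "K' = K div 2"
    have JJ: "J = 2 * J' + 1" "K = 2 * K' + 1" unfolding J'_def K'_def using N2
      by (metis add.commute mult_div_mod_eq)+
    define h where "h = (vector[-1/2,-1/2,1/2] :: real^3)"
    define d where "d = (vector[of_int (J'+1), of_int (K'+1), 0] :: real^3)"
    have gh: "g = h + d"
    proof -
      have "real_of_int J = 2 * of_int J' + 1" "real_of_int K = 2 * of_int K' + 1"
        using JJ by (simp_all add: of_int_add)
      then show ?thesis unfolding h_def d_def using JK g3 N2(1) by (simp add: vec3_eq field_simps)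
    qed
    have dl: "d \<in> lattice3" unfolding d_def by (simp add: lattice3_iff)
    have Lh: "Lam h"
    proof -
      have "h = g - d" using gh by simp
      then show ?thesis using Ldiff[OF Lg Lint[OF dl]] by simp
    qed
    define u where "u = phi h"
    have ul: "u \<in> lattice3" using Lh unfolding Lam_def u_def .
    have uv: "u = (-1/2) *\<^sub>R a + (-1/2) *\<^sub>R b + (1/2) *\<^sub>R t" unfolding u_def h_def by (rule phiv)
    have tu: "t = a + b + 2 *\<^sub>R u" unfolding uv by (simp add: vec_eq_iff field_simps)
    have phig: "phi g = u + of_int (J'+1) *\<^sub>R a + of_int (K'+1) *\<^sub>R b"
      unfolding gh phid u_def d_def phiv by simp
    have "colmat a b u \<in> GL3Z"
    proof (rule gl_lemma[OF lat(1,2) ul])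
      fix x assume "x \<in> lattice3"
      then obtain y where y: "Lam y" "phi y = x" using preimg by blast
      obtain k z1 z2 where yk: "y = of_int k *\<^sub>R g + vector[of_int z1, of_int z2, 0]" using decomp[OF y(1)] by blast
      define w where "w = (vector[of_int (k*(J'+1) + z1), of_int (k*(K'+1) + z2), of_int k] :: real^3)"
      have "x = phi y" using y by simp
      also have "\<dots> = of_int k *\<^sub>R phi g + of_int z1 *\<^sub>R a + of_int z2 *\<^sub>R b"
        unfolding yk phid phiv by simp
      also have "\<dots> = w$1 *\<^sub>R a + w$2 *\<^sub>R b + w$3 *\<^sub>R u"
        unfolding phig w_def by (simp add: vec_eq_iff algebra_simps)
      finally have "x = w$1 *\<^sub>R a + w$2 *\<^sub>R b + w$3 *\<^sub>R u" .
      moreover have "w \<in> lattice3" unfolding w_def by (simp add: lattice3_iff)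
      ultimately show "\<exists>w. w \<in> lattice3 \<and> x = w$1 *\<^sub>R a + w$2 *\<^sub>R b + w$3 *\<^sub>R u" by blast
    qed
    moreover have "P = (\<lambda>x. colmat a b u *v x) ` polytopeB"
    proof -
      have lin2: "linear (\<lambda>x. colmat a b u *v x)" by (rule matrix_vector_mul_linear)
      have "(\<lambda>x. colmat a b u *v x) ` polytopeB = convex hull ((\<lambda>x. colmat a b u *v x) `
          {vector [1,0,0], vector [0,1,0], vector [-2,-1,0], vector [1,1,2], vector [-3,-1,-2]})"
        unfolding polytopeB_def by (rule convex_hull_linear_image[OF lin2])
      also have "(\<lambda>x. colmat a b u *v x) ` {vector [1,0,0], vector [0,1,0], vector [-2,-1,0], vector [1,1,2], vector [-3,-1,-2]}
          = {a, b, -2 *\<^sub>R a - b, t, -2 *\<^sub>R a - t}"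
      proof -
        have "colmat a b u *v vector [1,0,0] = a" "colmat a b u *v vector [0,1,0] = b"
          "colmat a b u *v vector [-2,-1,0] = -2 *\<^sub>R a - b"
          "colmat a b u *v vector [1,1,2] = t" "colmat a b u *v vector [-3,-1,-2] = -2 *\<^sub>R a - t"
          unfolding colmat_mult tu by (simp_all add: vec_eq_iff algebra_simps)
        then show ?thesis by simp
      qed
      finally show ?thesis using P by simp
    qed
    ultimately show ?thesis unfolding GL3Z_equivalent_def by blast
  qed
qed


theorem lemma4p13:
  fixes P :: "(real^3) set"
  assumes "minimal_fano_polytope P"
    and "P112_triangle_in L1 T1" and "P112_triangle_in L2 T2" and "L1 \<noteq> L2"
    and "\<forall>x. x extreme_point_of T1 \<longrightarrow> x extreme_point_of P"
    and "\<forall>x. x extreme_point_of T2 \<longrightarrow> x extreme_point_of P"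
  shows "GL3Z_equivalent P polytopeA \<or> GL3Z_equivalent P polytopeB"
proof -
  obtain a b where a: "a \<in> lattice3" and b: "b \<in> lattice3"
    and indab: "\<And>u v. u *\<^sub>R a + v *\<^sub>R b = 0 \<Longrightarrow> u = 0 \<and> v = 0"
    and L1x: "\<And>x. x \<in> L1 \<longleftrightarrow> (\<exists>u v. x = u *\<^sub>R a + v *\<^sub>R b)"
    and sat1: "\<And>x. x \<in> lattice3 \<Longrightarrow> x \<in> L1 \<Longrightarrow> \<exists>u v. u \<in> \<int> \<and> v \<in> \<int> \<and> x = u *\<^sub>R a + v *\<^sub>R b"
    and e1: "a extreme_point_of T1" "b extreme_point_of T1" "(-2 *\<^sub>R a - b) extreme_point_of T1"
    and L1: "subspace L1" "dim L1 = 2"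
    using tri_data[OF assms(2)] by metis
  obtain s t where s: "s \<in> lattice3" and t: "t \<in> lattice3"
    and indst: "\<And>u v. u *\<^sub>R s + v *\<^sub>R t = 0 \<Longrightarrow> u = 0 \<and> v = 0"
    and L2x: "\<And>x. x \<in> L2 \<longleftrightarrow> (\<exists>u v. x = u *\<^sub>R s + v *\<^sub>R t)"
    and sat2: "\<And>x. x \<in> lattice3 \<Longrightarrow> x \<in> L2 \<Longrightarrow> \<exists>u v. u \<in> \<int> \<and> v \<in> \<int> \<and> x = u *\<^sub>R s + v *\<^sub>R t"
    and e2: "s extreme_point_of T2" "t extreme_point_of T2" "(-2 *\<^sub>R s - t) extreme_point_of T2"
    and L2: "subspace L2" "dim L2 = 2"
    using tri_data[OF assms(3)] by metis
  define c where "c = -2 *\<^sub>R a - b"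
  define r where "r = -2 *\<^sub>R s - t"
  have ext: "a extreme_point_of P" "b extreme_point_of P" "c extreme_point_of P"
    "s extreme_point_of P" "t extreme_point_of P" "r extreme_point_of P"
    using e1 e2 assms(5,6) unfolding c_def r_def by auto
  then have inP: "a \<in> P" "b \<in> P" "c \<in> P" "s \<in> P" "t \<in> P" "r \<in> P"
    unfolding extreme_point_of_def by auto
  have F: "fano_polytope P" using assms(1) unfolding minimal_fano_polytope_def by auto
  then obtain V where V: "finite V" "P = convex hull V" and fano: "interior P \<inter> lattice3 = {0}"
    unfolding fano_polytope_def by blast
  have cP: "convex P" using V by simp
  have compP: "compact P" using V by (simp add: compact_convex_hull finite_imp_compact)
  have K: "\<exists>n. n \<noteq> 0 \<and> (\<forall>q\<in>P \<inter> lattice3 - {\<rho>}. 0 \<le> n \<bullet> q)" if "\<rho> extreme_point_of P" for \<rho>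
    using min_sep[OF assms(1) that] .
  have aL1: "a \<in> L1" "b \<in> L1" "c \<in> L1" using L1x unfolding c_def
    by (metis add.right_neutral add_0 scaleR_one scaleR_zero_left diff_conv_add_uminus scaleR_minus1_left)+
  have sL2: "s \<in> L2" "t \<in> L2" "r \<in> L2" using L2x unfolding r_def
    by (metis add.right_neutral add_0 scaleR_one scaleR_zero_left diff_conv_add_uminus scaleR_minus1_left)+
  have ma: "-a = (1/2) *\<^sub>R b + (1/2) *\<^sub>R c" unfolding c_def by (simp add: vec_eq_iff field_simps)
  have ms: "-s = (1/2) *\<^sub>R t + (1/2) *\<^sub>R r" unfolding r_def by (simp add: vec_eq_iff field_simps)
  have nbc: "\<not> (b \<in> L2 \<and> c \<in> L2)"
  proof
    assume h: "b \<in> L2 \<and> c \<in> L2"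
    then have "-a \<in> L2" unfolding ma using L2(1) by (simp add: subspace_add subspace_scale)
    then have "a \<in> L2" using L2(1) subspace_neg by fastforce
    then have "L1 = L2" using sub_eq[OF L1(1) L2(1) L1(2) L2(2) L1x] h by blast
    then show False using assms(4) by simp
  qed
  have ntr: "\<not> (t \<in> L1 \<and> r \<in> L1)"
  proof
    assume h: "t \<in> L1 \<and> r \<in> L1"
    then have "-s \<in> L1" unfolding ms using L1(1) by (simp add: subspace_add subspace_scale)
    then have "s \<in> L1" using L1(1) subspace_neg by fastforce
    then have "L2 = L1" using sub_eq[OF L2(1) L1(1) L2(2) L1(2) L2x] h by blast
    then show False using assms(4) by simp
  qed
  have latc: "c \<in> lattice3" "r \<in> lattice3" unfolding c_def r_def
    using a b s t by (auto intro!: lattice3_diff lattice3_scale lattice3_uminus)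
  have aL2: "a \<in> L2"
    using a_in_L2[OF K cP a b s t] inP ext indab indst nbc L2x unfolding c_def r_def by blast
  have sL1: "s \<in> L1"
    using a_in_L2[OF K cP s t a b] inP ext indab indst ntr L1x unfolding c_def r_def by blast
  have tL1: "t \<notin> L1"
  proof
    assume "t \<in> L1" then have "L2 = L1" using sub_eq[OF L2(1) L1(1) L2(2) L1(2) L2x] sL1 by blast
    then show False using assms(4) by simp
  qed
  have bL2: "b \<notin> L2"
  proof
    assume "b \<in> L2" then have "L1 = L2" using sub_eq[OF L1(1) L2(1) L1(2) L2(2) L1x] aL2 by blast
    then show False using assms(4) by simp
  qed
  obtain i j where ij: "i \<in> \<int>" "j \<in> \<int>" "a = i *\<^sub>R s + j *\<^sub>R t" using sat2[OF a aL2] by blast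
  have j0: "j = 0"
  proof (rule ccontr)
    assume "j \<noteq> 0"
    then have "t = (1/j) *\<^sub>R (a - i *\<^sub>R s)" using ij(3) by (simp add: vec_eq_iff field_simps)
    then have "t \<in> L1" using L1(1) aL1(1) sL1 by (simp add: subspace_diff subspace_scale)
    then show False using tL1 by simp
  qed
  obtain i' j' where ij': "i' \<in> \<int>" "j' \<in> \<int>" "s = i' *\<^sub>R a + j' *\<^sub>R b" using sat1[OF s sL1] by blast
  have j'0: "j' = 0"
  proof (rule ccontr)
    assume "j' \<noteq> 0"
    then have "b = (1/j') *\<^sub>R (s - i' *\<^sub>R a)" using ij'(3) by (simp add: vec_eq_iff field_simps)
    then have "b \<in> L2" using L2(1) aL2 sL2(1) by (simp add: subspace_diff subspace_scale)
    then show False using bL2 by simp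
  qed
  have a0: "a \<noteq> 0" using indab[of 1 0] by auto
  have "a = (i * i') *\<^sub>R a" using ij(3) ij'(3) j0 j'0 by simp
  then have "(i * i' - 1) *\<^sub>R a = 0" by (simp add: algebra_simps)
  then have "i * i' = 1" using a0 by simp
  moreover obtain I where I: "i = of_int I" using ij(1) Ints_cases by blast
  moreover obtain I' where I': "i' = of_int I'" using ij'(1) Ints_cases by blast
  ultimately have "I * I' = 1" by (metis of_int_eq_1_iff of_int_mult)
  then have "I = 1 \<or> I = -1" by (rule pos_zmult_eq_1_iff_lemma)
  then have "i = 1 \<or> i = -1" using I by auto
  moreover have "i \<noteq> -1"
  proof
    assume "i = -1"
    then have "s = -a" using ij(3) j0 by simp
    moreover have "-a \<in> open_segment b c"
    proof -
      have "b \<noteq> c" unfolding c_def proof assume "b = -2 *\<^sub>R a - b"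
        then have "2 *\<^sub>R a + 2 *\<^sub>R b = 0" by (simp add: vec_eq_iff)
        then show False using indab by fastforce qed
      moreover have "-a = midpoint b c" unfolding midpoint_def ma by (simp add: scaleR_add_right)
      ultimately show ?thesis by simp
    qed
    ultimately show False using ext(4) inP(2,3) unfolding extreme_point_of_def by blast
  qed
  ultimately have sa: "s = a" using ij(3) j0 by simp
  have rr: "r = -2 *\<^sub>R a - t" unfolding r_def sa ..
  have ta: "\<not> (\<exists>u v. t = u *\<^sub>R a + v *\<^sub>R b)" using tL1 L1x by blast
  note B3 = basis3[OF indab ta]
  have Pe: "P = convex hull {a, b, c, t, r}"
  proof
    have "{x. x extreme_point_of P} \<subseteq> {a, b, c, t, r}"
    proof
      fix \<rho> assume rho: "\<rho> \<in> {x. x extreme_point_of P}"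
      show "\<rho> \<in> {a, b, c, t, r}"
      proof (rule ccontr)
        assume nr: "\<rho> \<notin> {a, b, c, t, r}"
        obtain n where n: "n \<noteq> 0" "\<forall>q\<in>P \<inter> lattice3 - {\<rho>}. 0 \<le> n \<bullet> q" using K rho by blast
        have mem: "a \<in> P \<inter> lattice3 - {\<rho>}" "b \<in> P \<inter> lattice3 - {\<rho>}" "c \<in> P \<inter> lattice3 - {\<rho>}"
          "t \<in> P \<inter> lattice3 - {\<rho>}" "r \<in> P \<inter> lattice3 - {\<rho>}"
          using nr a b t latc inP by auto
        have "0 \<le> n \<bullet> a" "0 \<le> n \<bullet> b" "0 \<le> n \<bullet> c" "0 \<le> n \<bullet> t" "0 \<le> n \<bullet> r"
          using n(2) mem by blast+
        then have "n \<bullet> a = 0" "n \<bullet> b = 0" "n \<bullet> t = 0"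
          using zero_trick[of n a b] zero_trick[of n a t] unfolding c_def rr by auto
        then have "n = 0" using orth3[of a b t n] B3(2) by blast
        then show False using n(1) by simp
      qed
    qed
    then show "P \<subseteq> convex hull {a, b, c, t, r}"
      using Krein_Milman_Minkowski[OF compP cP] hull_mono by blast
    show "convex hull {a, b, c, t, r} \<subseteq> P" using inP cP by (intro hull_minimal) auto
  qed
  obtain n where n: "n \<noteq> 0" "\<forall>q\<in>P \<inter> lattice3 - {t}. 0 \<le> n \<bullet> q" using K ext(5) by blast
  have ct: "a \<noteq> t" "b \<noteq> t" "c \<noteq> t" using aL1 tL1 by auto
  have rt: "r \<noteq> t"
  proof
    assume "r = t" then have "t = -a" unfolding rr by (simp add: vec_eq_iff)
    then have "t \<in> L1" using aL1 L1(1) subspace_neg by fastforce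
    then show False using tL1 by simp
  qed
  have "0 \<le> n \<bullet> a" "0 \<le> n \<bullet> b" "0 \<le> n \<bullet> c" "0 \<le> n \<bullet> r"
    using n(2) ct rt a b latc inP by auto
  then have na: "n \<bullet> a = 0" "n \<bullet> b = 0" using zero_trick[of n a b] unfolding c_def by auto
  have "n \<bullet> t \<noteq> 0" using orth3[of a b t n] B3(2) na n(1) by blast
  moreover have "n \<bullet> r = - (n \<bullet> t)" unfolding rr using na by (simp add: inner_diff_right)
  ultimately have nt: "n \<bullet> t < 0" using \<open>0 \<le> n \<bullet> r\<close> by linarith
  have sat1': "\<exists>u v. u \<in> \<int> \<and> v \<in> \<int> \<and> x = u *\<^sub>R a + v *\<^sub>R b"
    if "x \<in> lattice3" "\<exists>u v. x = u *\<^sub>R a + v *\<^sub>R b" for x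
    using sat1 L1x that by blast
  show ?thesis
    using coord_part[OF a b t B3(1) B3(2) sat1' _ na nt n(2) fano] Pe unfolding c_def rr by blast
qed

end
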